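(* Let $\Omega\subseteq\mathbb{R}^n$ be a bounded open set with Lipschitz boundary and let $f:\mathbb{R}^{N\times n}\to\mathbb{R}$ be a Borel measurable function which is strong Morrey quasiconvex in $\Omega$. Then $f$ is lower semicontinuous.
   Context: For a bounded open set $\Omega\subseteq\mathbb{R}^n$ with Lipschitz boundary, a Borel measurable $f:\mathbb{R}^{N\times n}\to\mathbb{R}$ is strong Morrey quasiconvex in $\Omega$ if: for every $\varepsilon>0$, every $\xi\in\mathbb{R}^{N\times n}$ and every $K>0$ there exists $\delta=\delta(\varepsilon,K,\xi)>0$ such that for every $\varphi\in W^{1,\infty}(\Omega;\mathbb{R}^N)$ (identified with its Lipschitz representative, continuous on $\overline\Omega$) with $\|D\varphi\|_{L^\infty(\Omega)}\le K$ and $\max_{x\in\partial\Omega}|\varphi(x)|\le\delta$ one has $f(\xi)\le\operatorname{ess\,sup}_{x\in\Omega}f(\xi+D\varphi(x))+\varepsilon$. *)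

theory Defs
  imports "HOL-Analysis.Analysis" "HOL-Probability.Essential_Supremum"
begin

text \<open>Lipschitz boundary: near every boundary point, after an orthogonal change of
  coordinates, the set is the strict subgraph (in a distinguished coordinate k) of a
  Lipschitz function that does not depend on that coordinate.\<close>
definition lipschitz_boundary :: "(real^'n) set \<Rightarrow> bool" where
  "lipschitz_boundary \<Omega> \<longleftrightarrow>
     (\<forall>p \<in> frontier \<Omega>. \<exists>r>0. \<exists>R k g L.
        orthogonal_transformation (R :: real^'n \<Rightarrow> real^'n) \<and>
        L-lipschitz_on UNIV (g :: real^'n \<Rightarrow> real) \<and>
        (\<forall>y t. g (y + t *\<^sub>R axis k 1) = g y) \<and>
        \<Omega> \<inter> ball p r = {x \<in> ball p r. (R x) $ k < g (R x)})"

text \<open>Elements of W^{1,\<infinity>}(\<Omega>;R^N) are represented by their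
  Lipschitz representative on the closure, together with their (a.e. defined) gradient D,
  an N x n matrix, which is the pointwise derivative at a.e. point of \<Omega>.\<close>
definition strong_morrey_qc :: "(real^'n) set \<Rightarrow> (real^'n^'m \<Rightarrow> real) \<Rightarrow> bool" where
  "strong_morrey_qc \<Omega> f \<longleftrightarrow>
     (\<forall>\<epsilon>>0. \<forall>\<xi>::real^'n^'m. \<forall>K>0. \<exists>\<delta>>0.
        \<forall>(\<phi>::real^'n \<Rightarrow> real^'m) (D::real^'n \<Rightarrow> real^'n^'m).
          (\<exists>C. C-lipschitz_on (closure \<Omega>) \<phi>) \<longrightarrow>
          (AE x in lebesgue_on \<Omega>. (\<phi> has_derivative (\<lambda>h. D x *v h)) (at x)) \<longrightarrow>
          (AE x in lebesgue_on \<Omega>. norm (D x) \<le> K) \<longrightarrow>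
          (\<forall>x \<in> frontier \<Omega>. norm (\<phi> x) \<le> \<delta>) \<longrightarrow>
          ereal (f \<xi>) \<le> esssup (lebesgue_on \<Omega>) (\<lambda>x. ereal (f (\<xi> + D x))) + ereal \<epsilon>)"

definition lower_semicontinuous :: "('a::topological_space \<Rightarrow> real) \<Rightarrow> bool" where
  "lower_semicontinuous f \<longleftrightarrow> (\<forall>x. \<forall>c < f x. \<forall>\<^sub>F y in nhds x. c < f y)"

end

theory Submission
  imports Defs
begin

lemma mat_bound:
  fixes A :: "real^'n^'m"
  shows "norm (A *v x) \<le> (real CARD('m) * real CARD('n) * norm A) * norm x"
proof -
  have bl: "bounded_linear ((*v) A)" by (simp add: matrix_vector_mul_bounded_linear)
  have "onorm ((*v) A) \<le> (\<Sum>i\<in>UNIV. \<Sum>j\<in>UNIV. \<bar>A $ i $ j\<bar>)"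
    by (rule onorm_le_matrix_component_sum)
  also have "\<dots> \<le> (\<Sum>i\<in>(UNIV::'m set). \<Sum>j\<in>(UNIV::'n set). norm A)"
    proof (intro sum_mono)
    fix i j
    have "\<bar>A $ i $ j\<bar> \<le> norm (A $ i)" using component_le_norm_cart[of "A $ i" j] by simp
    also have "\<dots> \<le> norm A" by (rule Finite_Cartesian_Product.norm_nth_le)
    finally show "\<bar>A $ i $ j\<bar> \<le> norm A" .
  qed
  also have "\<dots> = real CARD('m) * real CARD('n) * norm A" by simp
  finally have "onorm ((*v) A) \<le> real CARD('m) * real CARD('n) * norm A" .
  moreover have "norm (A *v x) \<le> onorm ((*v) A) * norm x" using onorm[OF bl] by simp
  ultimately show ?thesis by (meson mult_right_mono norm_ge_zero order_trans)
qed

theorem mainTheorem2: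
  fixes \<Omega> :: "(real^'n) set" and f :: "real^'n^'m \<Rightarrow> real"
  assumes "bounded \<Omega>" and "open \<Omega>" and "lipschitz_boundary \<Omega>"
    and "f \<in> borel_measurable borel"
    and "strong_morrey_qc \<Omega> f"
  shows "lower_semicontinuous f"
  unfolding lower_semicontinuous_def
proof (intro allI impI)
  fix \<xi> :: "real^'n^'m" and c assume c: "c < f \<xi>"
  define \<epsilon> where "\<epsilon> = (f \<xi> - c) / 2"
  have \<epsilon>: "\<epsilon> > 0" using c by (simp add: \<epsilon>_def)
  obtain \<delta> where \<delta>: "\<delta> > 0" and H: "\<And>(\<phi>::real^'n \<Rightarrow> real^'m) (D::real^'n \<Rightarrow> real^'n^'m).
          (\<exists>C. C-lipschitz_on (closure \<Omega>) \<phi>) \<Longrightarrow>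
          (AE x in lebesgue_on \<Omega>. (\<phi> has_derivative (\<lambda>h. D x *v h)) (at x)) \<Longrightarrow>
          (AE x in lebesgue_on \<Omega>. norm (D x) \<le> 1) \<Longrightarrow>
          (\<forall>x \<in> frontier \<Omega>. norm (\<phi> x) \<le> \<delta>) \<Longrightarrow>
          ereal (f \<xi>) \<le> esssup (lebesgue_on \<Omega>) (\<lambda>x. ereal (f (\<xi> + D x))) + ereal \<epsilon>"
  proof -
    have "\<forall>K>0. \<exists>\<delta>>0. \<forall>(\<phi>::real^'n \<Rightarrow> real^'m) (D::real^'n \<Rightarrow> real^'n^'m).
          (\<exists>C. C-lipschitz_on (closure \<Omega>) \<phi>) \<longrightarrow>
          (AE x in lebesgue_on \<Omega>. (\<phi> has_derivative (\<lambda>h. D x *v h)) (at x)) \<longrightarrow>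
          (AE x in lebesgue_on \<Omega>. norm (D x) \<le> K) \<longrightarrow>
          (\<forall>x \<in> frontier \<Omega>. norm (\<phi> x) \<le> \<delta>) \<longrightarrow>
          ereal (f \<xi>) \<le> esssup (lebesgue_on \<Omega>) (\<lambda>x. ereal (f (\<xi> + D x))) + ereal \<epsilon>"
      using assms(5) \<epsilon> unfolding strong_morrey_qc_def by blast
    then show ?thesis using that by (meson zero_less_one)
  qed
  obtain M0 where M0: "\<forall>x\<in>closure \<Omega>. norm x \<le> M0"
    using assms(1) bounded_closure bounded_iff by blast
  define M where "M = max M0 1"
  have M: "\<forall>x\<in>closure \<Omega>. norm x \<le> M" "M > 0" using M0 by (auto simp: M_def)
  define C0 where "C0 = real CARD('m) * real CARD('n)"
  have C0: "C0 \<ge> 1"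
  proof -
    have "(1::nat) \<le> CARD('m) * CARD('n)"
      by (simp add: Suc_leI)
    then show ?thesis unfolding C0_def by (metis of_nat_1 of_nat_le_iff of_nat_mult)
  qed
  define d where "d = min 1 (\<delta> / M) / C0"
  have d: "d > 0" using \<delta> M C0 by (simp add: d_def)
  have key: "c < f \<eta>" if "dist \<eta> \<xi> < d" for \<eta>
  proof -
    define A where "A = \<eta> - \<xi>"
    have nA: "norm A < d" using that by (simp add: A_def dist_norm)
    have CA: "C0 * norm A \<le> min 1 (\<delta> / M)"
      using nA C0 by (simp add: d_def field_simps)
    have bnd: "norm (A *v x) \<le> C0 * norm A * norm x" for x
      using mat_bound[of A x] by (simp add: C0_def)
    have lip: "(C0 * norm A)-lipschitz_on (closure \<Omega>) (\<lambda>x. A *v x)"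
    proof (rule lipschitz_onI)
      fix x y
      have "dist (A *v x) (A *v y) = norm (A *v (x - y))"
        by (simp add: dist_norm matrix_vector_mult_diff_distrib)
      also have "\<dots> \<le> C0 * norm A * dist x y" using bnd[of "x - y"] by (simp add: dist_norm)
      finally show "dist (A *v x) (A *v y) \<le> C0 * norm A * dist x y" .
    next
      show "0 \<le> C0 * norm A" using C0 by simp
    qed
    have der: "((\<lambda>x. A *v x) has_derivative (\<lambda>h. A *v h)) (at x)" for x
      by (simp add: bounded_linear_imp_has_derivative matrix_vector_mul_bounded_linear)
    have nA1: "norm A \<le> 1" using CA C0 nA
    proof -
      have "norm A \<le> C0 * norm A" using C0 by (simp add: mult_le_cancel_right1)
      then show ?thesis using CA by linarith
    qed
    have fr: "\<forall>x \<in> frontier \<Omega>. norm (A *v x) \<le> \<delta>"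
    proof
      fix x assume "x \<in> frontier \<Omega>"
      then have "norm x \<le> M" using M frontier_def by auto
      then have "norm (A *v x) \<le> C0 * norm A * M"
        using bnd[of x] C0 by (smt (verit) mult_left_mono norm_ge_zero zero_le_mult_iff)
      also have "\<dots> \<le> (\<delta> / M) * M" using CA M by (intro mult_right_mono) auto
      finally show "norm (A *v x) \<le> \<delta>" using M by simp
    qed
    have "ereal (f \<xi>) \<le> esssup (lebesgue_on \<Omega>) (\<lambda>x. ereal (f (\<xi> + A))) + ereal \<epsilon>"
      by (rule H[of "\<lambda>x. A *v x" "\<lambda>x. A", OF _ _ _ fr]) (use der nA1 lip in auto)
    also have "esssup (lebesgue_on \<Omega>) (\<lambda>x. ereal (f (\<xi> + A))) \<le> ereal (f \<eta>)"
      by (rule esssup_I) (auto simp: A_def)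
    finally have "ereal (f \<xi>) \<le> ereal (f \<eta>) + ereal \<epsilon>" by (simp add: add_right_mono)
    then have "f \<xi> \<le> f \<eta> + \<epsilon>" by (metis plus_ereal.simps(1) ereal_less_eq(3))
    then show ?thesis using c unfolding \<epsilon>_def by (simp add: field_simps)
  qed
  show "\<forall>\<^sub>F y in nhds \<xi>. c < f y"
    unfolding eventually_nhds_metric using d key by blast
qed

end
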